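(* (1) If $\tau$ is an involution in $\mathrm{PL}^+(\mathbb{S}^1)$ with $\tau\neq\mathrm{id}$, then $\tau$ is conjugate in $\mathrm{PL}^+(\mathbb{S}^1)$ to the rotation $r_\pi:z\mapsto -z$. (2) If $\tau$ is an involution in $\mathrm{PL}^-(\mathbb{S}^1)$, then $\tau$ is conjugate in $\mathrm{PL}(\mathbb{S}^1)$ to the reflection $s:z\mapsto\bar z$.
   Context: $\mathbb{S}^1=\{z\in\mathbb{C}:|z|=1\}$. A homeomorphism $f$ of $\mathbb{S}^1$ is piecewise linear (PL) if its lift $\tilde f:\mathbb{R}\to\mathbb{R}$ (defined by $f(e^{2\pi i x})=e^{2\pi i\tilde f(x)}$) is differentiable except at finitely or countably many break points, at which it has one-sided derivatives, and its derivative is constant on each connected component of the complement of the break points. $\mathrm{PL}(\mathbb{S}^1)$ is the group of PL homeomorphisms of $\mathbb{S}^1$, $\mathrm{PL}^+(\mathbb{S}^1)$ the orientation-preserving ones, $\mathrm{PL}^-(\mathbb{S}^1)$ the orientation-reversing ones. An involution is $\tau$ with $\tau^2=\mathrm{id}$. *)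

theory Defs
  imports "HOL-Analysis.Analysis"
begin

definition S1 :: "complex set" where
  "S1 = {z. cmod z = 1}"

definition is_lift :: "(complex \<Rightarrow> complex) \<Rightarrow> (real \<Rightarrow> real) \<Rightarrow> bool" where
  "is_lift f F \<longleftrightarrow> continuous_on UNIV F \<and>
     (\<forall>x. f (cis (2 * pi * x)) = cis (2 * pi * F x))"

definition pl_lift :: "(real \<Rightarrow> real) \<Rightarrow> bool" where
  "pl_lift F \<longleftrightarrow> (\<exists>B. countable B \<and>
     (\<forall>x. x \<notin> B \<longrightarrow> F differentiable (at x)) \<and>
     (\<forall>b\<in>B. (\<exists>l. (F has_real_derivative l) (at b within {..b})) \<and>
              (\<exists>r. (F has_real_derivative r) (at b within {b..}))) \<and>
     (\<forall>x. x \<notin> B \<longrightarrow> (\<exists>c. \<forall>y \<in> connected_component_set (- B) x.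
              (F has_real_derivative c) (at y))))"

definition PL :: "(complex \<Rightarrow> complex) set" where
  "PL = {f. (\<exists>g. homeomorphism S1 S1 f g) \<and> (\<exists>F. is_lift f F \<and> pl_lift F)}"

definition PL_plus :: "(complex \<Rightarrow> complex) set" where
  "PL_plus = {f. f \<in> PL \<and> (\<exists>F. is_lift f F \<and> strict_mono F)}"

definition PL_minus :: "(complex \<Rightarrow> complex) set" where
  "PL_minus = {f. f \<in> PL \<and> (\<exists>F. is_lift f F \<and> (\<forall>x y. x < y \<longrightarrow> F y < F x))}"

definition involution_S1 :: "(complex \<Rightarrow> complex) \<Rightarrow> bool" where
  "involution_S1 \<tau> \<longleftrightarrow> (\<forall>z\<in>S1. \<tau> (\<tau> z) = z)"

text \<open>h conjugates f to g on S1: h o f o h^{-1} = g, i.e. h o f = g o h on S1.\<close>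
definition conj_by :: "(complex \<Rightarrow> complex) \<Rightarrow> (complex \<Rightarrow> complex) \<Rightarrow> (complex \<Rightarrow> complex) \<Rightarrow> bool" where
  "conj_by h f g \<longleftrightarrow> (\<forall>z\<in>S1. h (f z) = g (h z))"

end

theory Submission
  imports Defs
begin

lemma cis2_eq: "cis (2*pi*a) = cis (2*pi*b) \<longleftrightarrow> (\<exists>n::int. a = b + of_int n)"
proof -
  have "cis (2*pi*a) = cis (2*pi*b) \<longleftrightarrow> (\<exists>n::int. \<i> * complex_of_real (2*pi*a) = \<i> * complex_of_real (2*pi*b) + (of_int (2 * n) * complex_of_real pi) * \<i>)"
    by (simp add: cis_conv_exp exp_eq)
  also have "\<dots> \<longleftrightarrow> (\<exists>n::int. a = b + of_int n)"
  proof -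
    have "\<i> * complex_of_real (2*pi*a) = \<i> * complex_of_real (2*pi*b) + (of_int (2 * n) * complex_of_real pi) * \<i> \<longleftrightarrow> a = b + of_int n" for n :: int
    proof -
      have "\<i> * complex_of_real (2*pi*a) = \<i> * complex_of_real (2*pi*b) + (of_int (2 * n) * complex_of_real pi) * \<i>
          \<longleftrightarrow> complex_of_real (2*pi*a) = complex_of_real (2*pi*b + 2*pi* of_int n)"
      proof -
        have e: "\<i> * complex_of_real (2*pi*b) + (of_int (2 * n) * complex_of_real pi) * \<i> = \<i> * complex_of_real (2*pi*b + 2*pi* of_int n)"
          by (simp add: algebra_simps)
        show ?thesis unfolding e by simp
      qed
      also have "\<dots> \<longleftrightarrow> 2*pi*a = 2*pi*b + 2*pi* of_int n" using of_real_eq_iff by blast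
      also have "\<dots> \<longleftrightarrow> a = b + of_int n"
      proof -
        have "2*pi*b + 2*pi* of_int n = 2*pi*(b + of_int n)" by (simp add: algebra_simps)
        then show ?thesis by simp
      qed
      finally show ?thesis .
    qed
    then show ?thesis by simp
  qed
  finally show ?thesis .
qed

lemma cis2_int: "cis (2*pi*(a + of_int n)) = cis (2*pi*a)"
  using cis2_eq by blast

lemma S1_cis: assumes "z \<in> S1" shows "cis (2*pi*(Arg z/(2*pi))) = z"
proof -
  have "z \<noteq> 0" "cmod z = 1" using assms by (auto simp: S1_def)
  then show ?thesis using cis_Arg[of z] by (simp add: sgn_div_norm)
qed

lemma cis_S1: "cis t \<in> S1" by (simp add: S1_def)

lemma S1_sphere: "S1 = sphere 0 1" by (auto simp: S1_def)

lemma int_const: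
  fixes D :: "real \<Rightarrow> real"
  assumes "continuous_on UNIV D" "\<And>x. D x \<in> \<int>"
  shows "D x = D 0"
proof -
  have "D constant_on UNIV"
  proof (rule continuous_discrete_range_constant[OF connected_UNIV assms(1)])
    fix x :: real
    show "\<exists>e>0. \<forall>y. y \<in> UNIV \<and> D y \<noteq> D x \<longrightarrow> e \<le> norm (D y - D x)"
    proof (intro exI[of _ 1] conjI allI impI)
      fix y assume "y \<in> UNIV \<and> D y \<noteq> D x"
      moreover have "D y - D x \<in> \<int>" using assms(2) by (simp add: Ints_diff)
      ultimately show "1 \<le> norm (D y - D x)"
      proof -
        obtain k :: int where k: "D y - D x = of_int k" using \<open>D y - D x \<in> \<int>\<close> Ints_cases by blast
        then have "k \<noteq> 0" using \<open>y \<in> UNIV \<and> D y \<noteq> D x\<close> by auto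
        then have "1 \<le> \<bar>k\<bar>" by linarith
        then show ?thesis using k by (metis of_int_1_le_iff of_int_abs real_norm_def)
      qed
    qed simp
  qed
  then show ?thesis by (auto simp: constant_on_def)
qed

lemma nonint_floor_const:
  fixes E :: "real \<Rightarrow> real"
  assumes "continuous_on UNIV E" "\<And>x. E x \<notin> \<int>"
  shows "of_int (floor (E 0)) < E x \<and> E x < of_int (floor (E 0)) + 1"
proof -
  have c: "connected (range E)" using connected_continuous_image[OF assms(1)] by simp
  have iv: "\<And>u v w. u \<in> range E \<Longrightarrow> v \<in> range E \<Longrightarrow> u \<le> w \<Longrightarrow> w \<le> v \<Longrightarrow> w \<in> range E"
    using c unfolding connected_iff_interval by blast
  let ?a = "of_int (floor (E 0)) :: real"
  have a0: "?a < E 0" using assms(2)[of 0] by (metis Ints_of_int floor_less_iff le_less of_int_floor_le)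
  have a1: "E 0 < ?a + 1" by simp
  show ?thesis
  proof (rule ccontr)
    assume "\<not> ?thesis"
    then consider "E x \<le> ?a" | "?a + 1 \<le> E x" by linarith
    then show False
    proof cases
      case 1 then have "?a \<in> range E" using iv[of "E x" "E 0" ?a] a0 by auto
      then show False using assms(2) by (metis Ints_of_int imageE)
    next
      case 2 then have "?a + 1 \<in> range E" using iv[of "E 0" "E x" "?a+1"] a1 by auto
      then show False using assms(2) by (metis Ints_of_int imageE of_int_1 of_int_add)
    qed
  qed
qed

lemma per_nat:
  fixes F :: "real \<Rightarrow> real"
  assumes A: "\<And>x. F (x+1) = F x + k"
  shows "F (x + real m) = F x + real m * k"
proof (induction m arbitrary: x)
  case 0 then show ?case by simp
next
  case (Suc m)
  have "x + real (Suc m) = (x + real m) + 1" by simp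
  then have "F (x + real (Suc m)) = F (x + real m) + k" using A[of "x + real m"] by metis
  also have "\<dots> = F x + real m * k + k" using Suc[of x] by simp
  finally show ?case by (simp add: algebra_simps)
qed

lemma per_int:
  fixes F :: "real \<Rightarrow> real"
  assumes A: "\<And>x. F (x+1) = F x + k"
  shows "F (x + of_int n) = F x + of_int n * k"
proof (cases "n \<ge> 0")
  case True
  then have e: "(of_int n :: real) = real (nat n)" by simp
  show ?thesis unfolding e by (rule per_nat[of F k, OF A])
next
  case False
  then have e: "(of_int n :: real) = - real (nat (-n))" by simp
  have "F x = F ((x - real (nat (-n))) + real (nat (-n)))" by simp
  also have "\<dots> = F (x - real (nat (-n))) + real (nat (-n)) * k" by (rule per_nat[of F k, OF A])
  finally show ?thesis unfolding e by (simp add: algebra_simps)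
qed

lemma pl_lift_affine:
  fixes F :: "real \<Rightarrow> real"
  assumes "pl_lift F"
  shows "pl_lift (\<lambda>x. a * x + b * F x + c)"
proof -
  obtain B where B: "countable B" "\<forall>x. x \<notin> B \<longrightarrow> F differentiable (at x)"
     "\<forall>b\<in>B. (\<exists>l. (F has_real_derivative l) (at b within {..b})) \<and>
              (\<exists>r. (F has_real_derivative r) (at b within {b..}))"
     "\<forall>x. x \<notin> B \<longrightarrow> (\<exists>c. \<forall>y \<in> connected_component_set (- B) x.
              (F has_real_derivative c) (at y))"
    using assms unfolding pl_lift_def by blast
  have D: "((\<lambda>x. a * x + b * F x + c) has_real_derivative (a + b * l)) (at y within S)"
    if "(F has_real_derivative l) (at y within S)" for l y S
  proof -
    have "((\<lambda>x. a * x + b * F x + c) has_real_derivative (a + b * l + 0)) (at y within S)"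
      by (intro DERIV_add DERIV_cmult_Id DERIV_cmult DERIV_const that)
    then show ?thesis by simp
  qed
  show ?thesis unfolding pl_lift_def
  proof (intro exI[of _ B] conjI ballI allI impI)
    show "countable B" by fact
  next
    fix x assume "x \<notin> B"
    then obtain l where "(F has_real_derivative l) (at x)" using B(2) real_differentiable_def by blast
    then show "(\<lambda>x. a * x + b * F x + c) differentiable (at x)" using D real_differentiable_def by blast
  next
    fix x assume "x \<in> B"
    then show "\<exists>l. ((\<lambda>x. a * x + b * F x + c) has_real_derivative l) (at x within {..x})"
      "\<exists>r. ((\<lambda>x. a * x + b * F x + c) has_real_derivative r) (at x within {x..})"
    proof -
      obtain l r where "(F has_real_derivative l) (at x within {..x})" "(F has_real_derivative r) (at x within {x..})"
        using B(3) \<open>x \<in> B\<close> by blast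
      then show "\<exists>l. ((\<lambda>x. a * x + b * F x + c) has_real_derivative l) (at x within {..x})"
      "\<exists>r. ((\<lambda>x. a * x + b * F x + c) has_real_derivative r) (at x within {x..})"
        using D[of l x "{..x}"] D[of r x "{x..}"] by blast+
    qed
  next
    fix x assume "x \<notin> B"
    then obtain c' where "\<forall>y \<in> connected_component_set (- B) x. (F has_real_derivative c') (at y)"
      using B(4) by blast
    then show "\<exists>c'. \<forall>y \<in> connected_component_set (- B) x.
              ((\<lambda>x. a * x + b * F x + c) has_real_derivative c') (at y)"
      using D[of c'] by blast
  qed
qed

definition hof :: "(real \<Rightarrow> real) \<Rightarrow> complex \<Rightarrow> complex" where
  "hof H z = cis (2*pi*H (Arg z/(2*pi)))"

lemma S1_rep: assumes "z \<in> S1" obtains t where "z = cis (2*pi*t)"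
  using S1_cis[OF assms] by metis

lemma hof_lift:
  assumes cont: "continuous_on UNIV H" and per: "\<And>x. H (x+1) = H x + 1"
  shows "is_lift (hof H) H"
  unfolding is_lift_def
proof (intro conjI allI)
  show "continuous_on UNIV H" by fact
  fix x :: real
  let ?w = "cis (2*pi*x)"
  have "cis (2*pi*(Arg ?w/(2*pi))) = ?w" by (rule S1_cis[OF cis_S1])
  then obtain n :: int where n: "Arg ?w/(2*pi) = x + of_int n" using cis2_eq by blast
  have "H (Arg ?w/(2*pi)) = H x + of_int n" unfolding n using per_int[of H 1, OF per] by simp
  then show "hof H ?w = cis (2*pi*H x)" unfolding hof_def by (simp add: cis2_int)
qed

lemma p_image: "(\<lambda>x. cis (2*pi*x)) ` {0..1} = S1"
proof
  show "(\<lambda>x. cis (2*pi*x)) ` {0..1} \<subseteq> S1" using cis_S1 by (simp add: image_subset_iff)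
  show "S1 \<subseteq> (\<lambda>x. cis (2*pi*x)) ` {0..1}"
  proof
    fix z assume z: "z \<in> S1"
    define t where "t = Arg z/(2*pi)"
    have ct: "cis (2*pi*t) = z" unfolding t_def by (rule S1_cis[OF z])
    have b: "-1/2 < t" "t \<le> 1/2" using Arg_bounded[of z] pi_gt_zero unfolding t_def by (auto simp: field_simps)
    show "z \<in> (\<lambda>x. cis (2*pi*x)) ` {0..1}"
    proof (cases "0 \<le> t")
      case True
      have "t \<in> {0..1}" unfolding atLeastAtMost_iff using True b by linarith
      then show ?thesis using ct by (intro rev_image_eqI[of t]) auto
    next
      case False
      have c1: "cis (2*pi*(t + 1)) = z" using ct cis2_int[of t 1] by simp
      have "t + 1 \<in> {0..1}" unfolding atLeastAtMost_iff using b False by linarith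
      then show ?thesis using c1 by (intro rev_image_eqI[of "t+1"]) auto
    qed
  qed
qed

lemma hof_cont:
  assumes cont: "continuous_on UNIV H" and per: "\<And>x. H (x+1) = H x + 1"
  shows "continuous_on S1 (hof H)"
proof -
  let ?p = "\<lambda>x::real. cis (2*pi*x)"
  have pc: "continuous_on A ?p" for A by (intro continuous_intros)
  have q: "quotient_map (top_of_set {0..1}) (top_of_set S1) ?p"
  proof (rule continuous_imp_quotient_map)
    show "continuous_map (top_of_set {0..1}) (top_of_set S1) ?p" using pc cis_S1 by auto
    show "compact_space (top_of_set {0..1::real})" by (simp add: compact_space_subtopology)
    show "Hausdorff_space (top_of_set S1)" by (simp add: Hausdorff_space_subtopology)
    show "?p ` topspace (top_of_set {0..1}) = topspace (top_of_set S1)" using p_image by simp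
  qed
  have L: "hof H (?p x) = ?p (H x)" for x using hof_lift[OF cont per] unfolding is_lift_def by blast
  have e: "hof H \<circ> ?p = ?p \<circ> H" using L by (simp add: fun_eq_iff)
  have "continuous_on {0..1} (?p \<circ> H)"
    by (rule continuous_on_compose[OF continuous_on_subset[OF cont] pc]) simp
  then have "continuous_map (top_of_set {0..1}) (top_of_set S1) (?p \<circ> H)"
    using cis_S1 by auto
  then have "continuous_map (top_of_set S1) (top_of_set S1) (hof H)"
    unfolding e[symmetric] by (rule continuous_compose_quotient_map[OF q])
  then show ?thesis by simp
qed

lemma H_surj:
  fixes H :: "real \<Rightarrow> real"
  assumes cont: "continuous_on UNIV H" and per: "\<And>x. H (x+1) = H x + 1"
  shows "\<exists>x. H x = y"
proof -
  have c: "connected (range H)" using connected_continuous_image[OF cont] by simp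
  define N where "N = ceiling \<bar>y - H 0\<bar>"
  have "H (0 + of_int N) = H 0 + of_int N" using per_int[of H 1 0 N, OF per] by simp
  moreover have "H (0 + of_int (-N)) = H 0 - of_int N" using per_int[of H 1, OF per, of 0 "-N"] by simp
  moreover have "\<bar>y - H 0\<bar> \<le> of_int N" unfolding N_def by simp
  ultimately have "H (of_int (-N)) \<le> y" "y \<le> H (of_int N)" by auto
  then have "y \<in> range H" using c unfolding connected_iff_interval by blast
  then show ?thesis by auto
qed

lemma hof_PL:
  assumes cont: "continuous_on UNIV H" and sm: "strict_mono H"
    and per: "\<And>x. H (x+1) = H x + 1" and pl: "pl_lift H"
  shows "hof H \<in> PL_plus"
proof -
  have L: "is_lift (hof H) H" by (rule hof_lift[OF cont per])
  then have Le: "hof H (cis (2*pi*x)) = cis (2*pi*H x)" for x unfolding is_lift_def by blast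
  have im: "hof H ` S1 = S1"
  proof
    show "hof H ` S1 \<subseteq> S1" unfolding hof_def using cis_S1 by blast
    show "S1 \<subseteq> hof H ` S1"
    proof
      fix w assume "w \<in> S1"
      then obtain y where y: "w = cis (2*pi*y)" by (rule S1_rep)
      obtain x where "H x = y" using H_surj[OF cont per] by blast
      then have "hof H (cis (2*pi*x)) = w" using Le y by simp
      then show "w \<in> hof H ` S1" using cis_S1 by (metis image_eqI)
    qed
  qed
  have inj: "inj_on (hof H) S1"
  proof
    fix z1 z2 assume z: "z1 \<in> S1" "z2 \<in> S1" and e: "hof H z1 = hof H z2"
    obtain t1 where t1: "z1 = cis (2*pi*t1)" using z(1) by (rule S1_rep)
    obtain t2 where t2: "z2 = cis (2*pi*t2)" using z(2) by (rule S1_rep)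
    have "cis (2*pi*H t1) = cis (2*pi*H t2)" using e Le t1 t2 by simp
    then obtain n :: int where "H t1 = H t2 + of_int n" using cis2_eq by blast
    also have "\<dots> = H (t2 + of_int n)" using per_int[of H 1, OF per] by simp
    finally have "t1 = t2 + of_int n" using strict_mono_eq[OF sm] by blast
    then show "z1 = z2" using t1 t2 cis2_int by simp
  qed
  have "compact S1" unfolding S1_sphere by simp
  then obtain g where "homeomorphism S1 S1 (hof H) g"
    using homeomorphism_compact[OF _ hof_cont[OF cont per] im inj] by blast
  then show ?thesis unfolding PL_plus_def PL_def using L pl sm by blast
qed

lemma lift_diff:
  assumes "is_lift f F" "is_lift f G"
  shows "\<exists>n::int. \<forall>x. F x = G x + of_int n"
proof -
  have cF: "continuous_on UNIV F" and cG: "continuous_on UNIV G" using assms unfolding is_lift_def by auto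
  have I: "F x - G x \<in> \<int>" for x
  proof -
    have "cis (2*pi*F x) = cis (2*pi*G x)" using assms unfolding is_lift_def by metis
    then obtain n :: int where "F x = G x + of_int n" using cis2_eq by blast
    then show ?thesis by simp
  qed
  have c: "continuous_on UNIV (\<lambda>x. F x - G x)" using cF cG by (intro continuous_intros)
  have k: "F x - G x = F 0 - G 0" for x using int_const[OF c I] by simp
  obtain n :: int where "F 0 - G 0 = of_int n" using I[of 0] Ints_cases by blast
  then show ?thesis using k by (intro exI[of _ n]) (auto simp: algebra_simps)
qed

lemma PL_lift:
  assumes "t \<in> PL" "is_lift t F"
  shows "pl_lift F" "inj_on t S1" "continuous_on UNIV F"
proof -
  obtain F2 where F2: "is_lift t F2" "pl_lift F2" using assms(1) unfolding PL_def by blast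
  obtain n :: int where n: "\<forall>x. F x = F2 x + of_int n" using lift_diff[OF assms(2) F2(1)] by blast
  have e: "F = (\<lambda>x. 0 * x + 1 * F2 x + of_int n)" using n by auto
  have "pl_lift (\<lambda>x. 0 * x + 1 * F2 x + of_int n)" by (rule pl_lift_affine[OF F2(2)])
  then show "pl_lift F" unfolding e .
  obtain g where "homeomorphism S1 S1 t g" using assms(1) unfolding PL_def by blast
  then have "\<forall>x\<in>S1. g (t x) = x" unfolding homeomorphism_def by blast
  then show "inj_on t S1" by (metis inj_onI)
  show "continuous_on UNIV F" using assms(2) unfolding is_lift_def by blast
qed

lemma lift_per:
  assumes L: "is_lift f F" and inj: "inj_on f S1" and injF: "inj F"
  shows "(\<forall>x. F (x+1) = F x + 1) \<or> (\<forall>x. F (x+1) = F x - 1)"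
proof -
  have cF: "continuous_on UNIV F" using L unfolding is_lift_def by auto
  have Le: "f (cis (2*pi*x)) = cis (2*pi*F x)" for x using L unfolding is_lift_def by blast
  have I: "F (x+1) - F x \<in> \<int>" for x
  proof -
    have "cis (2*pi*F (x+1)) = cis (2*pi*F x)"
      using Le[of "x+1"] Le[of x] cis2_int[of x 1] by simp
    then obtain n :: int where "F (x+1) = F x + of_int n" using cis2_eq by blast
    then show ?thesis by simp
  qed
  have c: "continuous_on UNIV (\<lambda>x. F (x+1) - F x)"
    by (intro continuous_intros continuous_on_compose2[OF cF]) auto
  have k: "F (x+1) - F x = F 1 - F 0" for x using int_const[OF c I] by simp
  obtain k :: int where kk: "F 1 - F 0 = of_int k" using I[of 0] Ints_cases by auto
  have "k \<noteq> 0" using injF kk by (metis add_0 eq_iff_diff_eq_0 inj_eq of_int_0 zero_neq_one)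
  have conn: "connected (F ` {0..1})"
    by (rule connected_continuous_image[OF continuous_on_subset[OF cF]]) auto
  have iv: "\<And>u v w. u \<in> F`{0..1} \<Longrightarrow> v \<in> F`{0..1} \<Longrightarrow> u \<le> w \<Longrightarrow> w \<le> v \<Longrightarrow> w \<in> F`{0..1}"
    using conn unfolding connected_iff_interval by blast
  have F01: "F 0 \<in> F`{0..1}" "F 1 \<in> F`{0..1}" by auto
  have bad: False if v: "v \<in> F ` {0..1}" "v \<noteq> F 0" "v \<noteq> F 1" "v - F 0 \<in> \<int>" for v
  proof -
    obtain y where y: "y \<in> {0..1}" "F y = v" using v(1) by blast
    have "y \<noteq> 0" "y \<noteq> 1" using y v by auto
    then have y01: "0 < y" "y < 1" using y by auto
    obtain j :: int where j: "v = F 0 + of_int j" using v(4) Ints_cases by (metis add.commute diff_add_cancel)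
    have "f (cis (2*pi*y)) = f (cis (2*pi*0))"
      using Le[of y] Le[of 0] y j cis2_int[of "F 0" j] by simp
    then have "cis (2*pi*y) = cis (2*pi*0)" using inj cis_S1 by (meson inj_onD)
    then obtain n :: int where "y = 0 + of_int n" using cis2_eq by blast
    then show False using y01 by (metis add_0 of_int_0_less_iff of_int_less_1_iff not_less zless_imp_add1_zle
          of_int_1 le_less_trans less_irrefl)
  qed
  have "k = 1 \<or> k = -1"
  proof (rule ccontr)
    assume "\<not> ?thesis"
    then consider "k \<ge> 2" | "k \<le> -2" using \<open>k \<noteq> 0\<close> by linarith
    then show False
    proof cases
      case 1
      have "F 0 + 1 \<in> F ` {0..1}" using iv[OF F01, of "F 0 + 1"] 1 kk by auto
      then show False using bad[of "F 0 + 1"] 1 kk by auto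
    next
      case 2
      have "F 0 - 1 \<in> F ` {0..1}" using iv[OF F01(2) F01(1), of "F 0 - 1"] 2 kk by auto
      then show False using bad[of "F 0 - 1"] 2 kk by auto
    qed
  qed
  then show ?thesis using k kk by (auto simp: algebra_simps)
qed

lemma cis_half: "cis (2*pi*(y + 1/2)) = - cis (2*pi*y)"
proof -
  have "2*pi*(y + 1/2) = 2*pi*y + pi" by (simp add: algebra_simps)
  then show ?thesis by (simp add: complex_eq_iff)
qed

lemma part1:
  assumes t: "t \<in> PL_plus" and inv: "involution_S1 t" and z0: "z0 \<in> S1" "t z0 \<noteq> z0"
  shows "\<exists>h\<in>PL_plus. conj_by h t (\<lambda>z. - z)"
proof -
  obtain F where L: "is_lift t F" and sm: "strict_mono F" using t unfolding PL_plus_def by blast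
  have tPL: "t \<in> PL" using t unfolding PL_plus_def by blast
  note P = PL_lift[OF tPL L]
  have cF: "continuous_on UNIV F" by (rule P(3))
  have Le: "t (cis (2*pi*x)) = cis (2*pi*F x)" for x using L unfolding is_lift_def by blast
  have per: "\<And>x. F (x+1) = F x + 1"
  proof -
    have "inj F" using sm strict_mono_imp_inj_on by blast
    from lift_per[OF L P(2) this] show "\<And>x. F (x+1) = F x + 1"
    proof
      assume "\<forall>x. F (x + 1) = F x - 1"
      then have "F (0+1) = F 0 - 1" by blast
      then have "F (0+1) < F 0" by simp
      moreover have "F 0 < F (0+1)" using sm by (simp add: strict_mono_less)
      ultimately have False by simp
      then show "\<And>x. F (x+1) = F x + 1" by simp
    qed simp
  qed
  have pi: "F (x + of_int n) = F x + of_int n" for x n using per_int[of F 1, OF per] by simp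
  have II: "F (F x) - x \<in> \<int>" for x
  proof -
    have "cis (2*pi*F (F x)) = t (t (cis (2*pi*x)))" using Le by simp
    also have "\<dots> = cis (2*pi*x)" using inv cis_S1 unfolding involution_S1_def by blast
    finally obtain n :: int where "F (F x) = x + of_int n" using cis2_eq by blast
    then show ?thesis by simp
  qed
  have cFF: "continuous_on UNIV (\<lambda>x. F (F x) - x)"
    by (intro continuous_intros continuous_on_compose2[OF cF] cF) auto
  obtain m :: int where m0: "F (F 0) - 0 = of_int m" using II[of 0] Ints_cases by blast
  have m: "F (F x) = x + of_int m" for x using int_const[OF cFF II, of x] m0 by simp
  have nofix: "F x - x \<notin> \<int>" for x
  proof
    assume "F x - x \<in> \<int>"
    then obtain j :: int where j: "F x = x + of_int j" by (metis Ints_cases add.commute diff_add_cancel)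
    define G where "G y = F y - of_int j" for y
    have GG: "G (G y) = y + of_int m - 2 * of_int j" for y
      unfolding G_def using pi[of "F y" "-j"] m[of y] by simp
    have "G x = x" unfolding G_def using j by simp
    then have "of_int m - 2 * of_int j = (0::real)" using GG[of x] by simp
    then have GG2: "G (G y) = y" for y using GG[of y] by simp
    have smG: "strict_mono G" using sm unfolding G_def strict_mono_def by simp
    have "G y = y" for y
    proof (rule ccontr)
      assume "G y \<noteq> y"
      then consider "G y < y" | "y < G y" by linarith
      then show False
      proof cases
        case 1 then have "G (G y) < G y" using smG by (simp add: strict_mono_less)
        then show False using 1 GG2[of y] by simp
      next
        case 2 then have "G y < G (G y)" using smG by (simp add: strict_mono_less)
        then show False using 2 GG2[of y] by simp
      qed
    qed
    then have "t (cis (2*pi*y)) = cis (2*pi*y)" for y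
      using Le[of y] cis2_int[of y j] unfolding G_def by (metis diff_add_cancel)
    moreover obtain y where "z0 = cis (2*pi*y)" using z0(1) by (rule S1_rep)
    ultimately show False using z0(2) by simp
  qed
  define a where "a = floor (F 0 - 0)"
  have cE: "continuous_on UNIV (\<lambda>x. F x - x)" by (intro continuous_intros cF)
  have ab: "of_int a < F x - x \<and> F x - x < of_int a + 1" for x
    using nonint_floor_const[OF cE nofix, of x] unfolding a_def by simp
  define G where "G y = F y - of_int a" for y
  have GG: "G (G y) = y + of_int (m - 2 * a)" for y
    unfolding G_def using pi[of "F y" "-a"] m[of y] by simp
  have e1: "of_int (m - 2*a) = (G (G 0) - G 0) + (G 0 - 0)" using GG[of 0] by simp
  have e2: "0 < G (G 0) - G 0 \<and> G (G 0) - G 0 < 1" using ab[of "G 0"] unfolding G_def[of "G 0"] by simp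
  have e3: "0 < G 0 - 0 \<and> G 0 - 0 < 1" using ab[of 0] unfolding G_def by simp
  have "(0::real) < of_int (m - 2*a) \<and> of_int (m - 2*a) < (2::real)"
    unfolding e1 using e2 e3 by linarith
  then have "m - 2*a = 1" by linarith
  then have GG1: "G (G y) = y + 1" for y using GG by simp
  define H where "H x = (1/2) * x + (1/2) * F x + (- of_int a / 2 - 1/4)" for x
  have Hpl: "pl_lift H" unfolding H_def[abs_def] by (rule pl_lift_affine[OF P(1)])
  have Hc: "continuous_on UNIV H" unfolding H_def[abs_def] by (intro continuous_intros cF)
  have Hsm: "strict_mono H" unfolding strict_mono_def
  proof (intro allI impI)
    fix x y :: real assume "x < y"
    then have "F x < F y" using sm by (simp add: strict_mono_less)
    then show "H x < H y" using \<open>x < y\<close> unfolding H_def by linarith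
  qed
  have Hper: "H (x+1) = H x + 1" for x unfolding H_def using per[of x] by (simp add: field_simps)
  have HG: "H (G x) = H x + 1/2" for x
  proof -
    have "F (G x) = x + 1 + of_int a" using GG1[of x] unfolding G_def by simp
    then show ?thesis unfolding H_def G_def by (simp add: field_simps)
  qed
  have hPL: "hof H \<in> PL_plus" by (rule hof_PL[OF Hc Hsm Hper Hpl])
  have Lh: "hof H (cis (2*pi*x)) = cis (2*pi*H x)" for x
    using hof_lift[OF Hc Hper] unfolding is_lift_def by blast
  have "conj_by (hof H) t (\<lambda>z. - z)"
    unfolding conj_by_def
  proof
    fix z assume "z \<in> S1"
    then obtain y where y: "z = cis (2*pi*y)" by (rule S1_rep)
    have "t z = cis (2*pi*G y)" unfolding y Le G_def using cis2_int[of "F y - of_int a" a] by simp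
    then have "hof H (t z) = cis (2*pi*(H y + 1/2))" using Lh HG by simp
    also have "\<dots> = - hof H z" unfolding y Lh cis_half ..
    finally show "hof H (t z) = - hof H z" .
  qed
  then show ?thesis using hPL by blast
qed

lemma part2:
  assumes t: "t \<in> PL_minus" and inv: "involution_S1 t"
  shows "\<exists>h\<in>PL. conj_by h t cnj"
proof -
  obtain F where L: "is_lift t F" and sa: "\<forall>x y. x < y \<longrightarrow> F y < F x" using t unfolding PL_minus_def by blast
  have tPL: "t \<in> PL" using t unfolding PL_minus_def by blast
  note P = PL_lift[OF tPL L]
  have cF: "continuous_on UNIV F" by (rule P(3))
  have Le: "t (cis (2*pi*x)) = cis (2*pi*F x)" for x using L unfolding is_lift_def by blast
  have injF: "inj F"
  proof (rule injI)
    fix x y assume "F x = F y"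
    then show "x = y" using sa by (metis less_irrefl linorder_neqE)
  qed
  have per: "\<And>x. F (x+1) = F x - 1"
  proof -
    from lift_per[OF L P(2) injF] show "\<And>x. F (x+1) = F x - 1"
    proof
      assume "\<forall>x. F (x + 1) = F x + 1"
      then have "F (0+1) = F 0 + 1" by blast
      then have "F 0 < F (0+1)" by simp
      moreover have "F (0+1) < F 0" using sa by simp
      ultimately have False by simp
      then show "\<And>x. F (x+1) = F x - 1" by simp
    qed simp
  qed
  have pi: "F (x + of_int n) = F x - of_int n" for x n
    using per_int[of F "-1" x n] per by simp
  have II: "F (F x) - x \<in> \<int>" for x
  proof -
    have "cis (2*pi*F (F x)) = t (t (cis (2*pi*x)))" using Le by simp
    also have "\<dots> = cis (2*pi*x)" using inv cis_S1 unfolding involution_S1_def by blast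
    finally obtain n :: int where "F (F x) = x + of_int n" using cis2_eq by blast
    then show ?thesis by simp
  qed
  have cFF: "continuous_on UNIV (\<lambda>x. F (F x) - x)"
    by (intro continuous_intros continuous_on_compose2[OF cF] cF) auto
  have m: "F (F x) - x = F (F 0) - 0" for x using int_const[OF cFF II, of x] by simp
  have cE: "continuous_on UNIV (\<lambda>x. F x - x)" by (intro continuous_intros cF)
  have conn: "connected (range (\<lambda>x. F x - x))" using connected_continuous_image[OF cE] by simp
  define N where "N = ceiling \<bar>F 0\<bar>"
  have Nb: "\<bar>F 0\<bar> \<le> of_int N" unfolding N_def by (rule le_of_int_ceiling)
  have "F (0 + of_int N) = F 0 - of_int N" by (rule pi)
  then have r1: "F (of_int N) - of_int N \<le> 0" using Nb by simp
  have "F (0 + of_int (-N)) = F 0 + of_int N" using pi[of 0 "-N"] by simp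
  then have r2: "0 \<le> F (of_int (-N)) - of_int (-N)" using Nb by simp
  have iv: "\<And>u v w. u \<in> range (\<lambda>x. F x - x) \<Longrightarrow> v \<in> range (\<lambda>x. F x - x) \<Longrightarrow> u \<le> w \<Longrightarrow> w \<le> v \<Longrightarrow> w \<in> range (\<lambda>x. F x - x)"
    using conn unfolding connected_iff_interval by blast
  have "0 \<in> range (\<lambda>x. F x - x)" by (rule iv[OF rangeI rangeI r1 r2])
  then obtain p where "F p - p = 0" by auto
  then have "F (F p) - p = 0" by simp
  then have FF: "F (F x) = x" for x using m[of x] m[of p] by simp
  define H where "H x = (1/2) * x + (-1/2) * F x + 0" for x
  have Hpl: "pl_lift H" unfolding H_def[abs_def] by (rule pl_lift_affine[OF P(1)])
  have Hc: "continuous_on UNIV H" unfolding H_def[abs_def] by (intro continuous_intros cF)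
  have Hsm: "strict_mono H" unfolding strict_mono_def
  proof (intro allI impI)
    fix x y :: real assume "x < y"
    then have "F y < F x" using sa by simp
    then show "H x < H y" using \<open>x < y\<close> unfolding H_def by linarith
  qed
  have Hper: "H (x+1) = H x + 1" for x unfolding H_def using per[of x] by (simp add: field_simps)
  have HF: "H (F x) = - H x" for x unfolding H_def using FF[of x] by (simp add: field_simps)
  have hPL: "hof H \<in> PL" using hof_PL[OF Hc Hsm Hper Hpl] unfolding PL_plus_def by blast
  have Lh: "hof H (cis (2*pi*x)) = cis (2*pi*H x)" for x
    using hof_lift[OF Hc Hper] unfolding is_lift_def by blast
  have "conj_by (hof H) t cnj"
    unfolding conj_by_def
  proof
    fix z assume "z \<in> S1"
    then obtain y where y: "z = cis (2*pi*y)" by (rule S1_rep)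
    have "hof H (t z) = cis (2*pi*H (F y))" unfolding y Le Lh ..
    also have "\<dots> = cis (- (2*pi*H y))" unfolding HF by simp
    also have "\<dots> = cnj (hof H z)" unfolding y Lh by (simp add: cis_cnj)
    finally show "hof H (t z) = cnj (hof H z)" .
  qed
  then show ?thesis using hPL by blast
qed

theorem proposition2p4:
  shows "(\<forall>\<tau>\<in>PL_plus. involution_S1 \<tau> \<and> (\<exists>z\<in>S1. \<tau> z \<noteq> z) \<longrightarrow>
            (\<exists>h\<in>PL_plus. conj_by h \<tau> (\<lambda>z. - z)))
       \<and> (\<forall>\<tau>\<in>PL_minus. involution_S1 \<tau> \<longrightarrow>
            (\<exists>h\<in>PL. conj_by h \<tau> cnj))"
  using part1 part2 by blast

end
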